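(* Let $\mathcal{B}\subseteq\{1,2\}^3$ be a basic set with associated $S_2$-SFT $X^{\mathcal{B}}$ and SNRE sequences $(a_n),(b_n)$, and let $c_n=a_n+b_n$. If the SNRE is of the cooperating type, with $c_n=c_{n-1}^2+g_{n-1}$, then $$h(X^{\mathcal{B}})=\frac14\Big[\ln c_1+\lim_{n\to\infty}\sum_{j=1}^{n-1}2^{-j}\ln\Big(1+\frac{g_j}{c_j^2}\Big)\Big].$$
   Context: $S_2$ is the free semigroup on two generators, identified with finite words over $\{1,2\}$ (root $\epsilon$). Alphabet $\mathcal{A}=\{1,2\}$; a basic set $\mathcal{B}\subseteq\mathcal{A}^3$ is a set of admissible 2-blocks $(i,i_1,i_2)$, $X^{\mathcal{B}}$ the associated $S_2$-SFT. $a_n$ (resp. $b_n$) is the number of maps $u$ from words of length $\le n$ to $\mathcal{A}$ with $(u(w),u(w1),u(w2))\in\mathcal{B}$ for all words $w$ of length $\le n-1$ and $u(\epsilon)=1$ (resp. $2$); equivalently $a_0=b_0=1$, $a_n=F^{(a)}(a_{n-1},b_{n-1})$, $b_n=F^{(b)}(a_{n-1},b_{n-1})$ with $F^{(a)}(x,y)=\sum_{(1,i,j)\in\mathcal{B}}z_iz_j$, $F^{(b)}(x,y)=\sum_{(2,i,j)\in\mathcal{B}}z_iz_j$, $z_1=x,z_2=y$. Entropy: $h(X^{\mathcal{B}})=\limsup_{n}\frac{\ln(a_n+b_n)}{2^{n+1}-1}$ (known to be a limit). The SNRE is of cooperating type if $c_n=c_{n-1}^2+g_{n-1}$ for all $n\ge2$,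 where $g_{m}=G(a_m,b_m)$ for a polynomial $G$ with nonnegative integer coefficients, and $g_m\le c_m^2$ for all $m$. *)

theory Defs
  imports "HOL-Analysis.Analysis"
begin

text \<open>Alphabet {1,2} encoded as the natural numbers 1 and 2; a 2-block (i,i1,i2) is a triple.\<close>

type_synonym block = "nat \<times> nat \<times> nat"

definition basic_set :: "block set \<Rightarrow> bool" where
  "basic_set B \<longleftrightarrow> B \<subseteq> {1,2} \<times> {1,2} \<times> {1,2}"

definition snre_F :: "block set \<Rightarrow> nat \<Rightarrow> nat \<Rightarrow> nat \<Rightarrow> nat" where
  "snre_F B k x y =
     (\<Sum>(i,j)\<in>{(i,j). (k,i,j) \<in> B}.
        (if i = 1 then x else y) * (if j = 1 then x else y))"

fun snre :: "block set \<Rightarrow> nat \<Rightarrow> nat \<times> nat" where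
  "snre B 0 = (1, 1)"
| "snre B (Suc n) =
     (snre_F B 1 (fst (snre B n)) (snd (snre B n))
    , snre_F B 2 (fst (snre B n)) (snd (snre B n)))"

definition snre_a :: "block set \<Rightarrow> nat \<Rightarrow> nat" where
  "snre_a B n = fst (snre B n)"

definition snre_b :: "block set \<Rightarrow> nat \<Rightarrow> nat" where
  "snre_b B n = snd (snre B n)"

definition snre_c :: "block set \<Rightarrow> nat \<Rightarrow> nat" where
  "snre_c B n = snre_a B n + snre_b B n"

definition sft_entropy :: "block set \<Rightarrow> ereal" where
  "sft_entropy B = limsup (\<lambda>n. ereal (ln (real (snre_c B n)) / (2 ^ (n + 1) - 1)))"

text \<open>A bivariate polynomial with nonnegative integer coefficients is given by a
  finitely supported coefficient function on exponent pairs (i,j).\<close>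
definition poly2_eval :: "(nat \<times> nat \<Rightarrow> nat) \<Rightarrow> nat \<Rightarrow> nat \<Rightarrow> nat" where
  "poly2_eval G x y = (\<Sum>(i,j)\<in>{p. G p \<noteq> 0}. G (i,j) * x ^ i * y ^ j)"

definition cooperating_with :: "block set \<Rightarrow> (nat \<times> nat \<Rightarrow> nat) \<Rightarrow> bool" where
  "cooperating_with B G \<longleftrightarrow>
     finite {p. G p \<noteq> 0} \<and>
     (\<forall>n\<ge>2. snre_c B n = (snre_c B (n - 1))\<^sup>2 + poly2_eval G (snre_a B (n - 1)) (snre_b B (n - 1))) \<and>
     (\<forall>m. poly2_eval G (snre_a B m) (snre_b B m) \<le> (snre_c B m)\<^sup>2)"

end

theory Submission
  imports Defs
begin

theorem proposition4:
  fixes B :: "block set" and G :: "nat \<times> nat \<Rightarrow> nat"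
  assumes "basic_set B"
    and "cooperating_with B G"
  shows "\<exists>L. (\<lambda>n. \<Sum>j=1..<n. (1/2) ^ j *
                 ln (1 + real (poly2_eval G (snre_a B j) (snre_b B j)) / (real (snre_c B j))\<^sup>2))
             \<longlonglongrightarrow> L
          \<and> sft_entropy B = ereal ((1/4) * (ln (real (snre_c B 1)) + L))"
proof -
  define c where "c n = real (snre_c B n)" for n
  define g where "g n = real (poly2_eval G (snre_a B n) (snre_b B n))" for n
  define f where "f j = (1/2::real) ^ j * ln (1 + g j / (c j)\<^sup>2)" for j
  define S where "S n = (\<Sum>j=1..<n. f j)" for n
  have rec: "c n = (c (n-1))\<^sup>2 + g (n-1)" if "n \<ge> 2" for n
    using assms(2) that unfolding cooperating_with_def c_def g_def by auto
  have gle: "g m \<le> (c m)\<^sup>2" for m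
  proof -
    have "poly2_eval G (snre_a B m) (snre_b B m) \<le> (snre_c B m)\<^sup>2"
      using assms(2) unfolding cooperating_with_def by auto
    hence "real (poly2_eval G (snre_a B m) (snre_b B m)) \<le> real ((snre_c B m)\<^sup>2)" by linarith
    thus ?thesis unfolding g_def c_def by simp
  qed
  have g0: "g m \<ge> 0" for m unfolding g_def by simp
  have c0: "c m \<ge> 0" for m unfolding c_def by simp
  have fnn: "0 \<le> f j" for j
  proof -
    have "0 \<le> g j / (c j)\<^sup>2" using g0 by simp
    thus ?thesis unfolding f_def by simp
  qed
  have fle: "f j \<le> (1/2) ^ j * ln 2" for j
  proof -
    have "g j / (c j)\<^sup>2 \<le> 1"
      using gle[of j] by (cases "c j = 0") (auto simp: divide_le_eq)
    moreover have "0 \<le> g j / (c j)\<^sup>2" using g0 by simp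
    ultimately have "ln (1 + g j / (c j)\<^sup>2) \<le> ln 2" by simp
    thus ?thesis unfolding f_def by (simp add: mult_left_mono)
  qed
  have summ: "summable f"
  proof (rule summable_comparison_test')
    show "summable (\<lambda>j. (1/2::real) ^ j * ln 2)"
      by (intro summable_mult2 summable_geometric) simp
    show "norm (f n) \<le> (1/2) ^ n * ln 2" if "n \<ge> 0" for n using fnn fle by simp
  qed
  define L where "L = suminf f - f 0"
  have SL: "S \<longlonglongrightarrow> L"
  proof -
    have "(\<lambda>n. sum f {..<n} - f 0) \<longlonglongrightarrow> L"
      unfolding L_def by (intro tendsto_diff summable_LIMSEQ summ tendsto_const)
    moreover have "\<forall>\<^sub>F n in sequentially. sum f {..<n} - f 0 = S n"
    proof (rule eventually_sequentiallyI[of 1])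
      fix n :: nat assume "1 \<le> n"
      hence "sum f {0..<n} = f 0 + sum f {Suc 0..<n}"
        by (intro sum.atLeast_Suc_lessThan) simp
      thus "sum f {..<n} - f 0 = S n" unfolding S_def by (simp add: atLeast0LessThan)
    qed
    ultimately show ?thesis by (rule Lim_transform_eventually)
  qed
  define e where "e n = ln (real (snre_c B n)) / (2 ^ (n + 1) - 1)" for n
  have ent: "sft_entropy B = Limsup sequentially (\<lambda>n. ereal (e n))"
    unfolding sft_entropy_def e_def by simp
  have elim: "e \<longlonglongrightarrow> (1/4) * (ln (c 1) + L)"
  proof (cases "c 1 = 0")
    case True
    have cz: "c n = 0" if "n \<ge> 1" for n
      using that
    proof (induction n rule: dec_induct)
      case base thus ?case using True by simp
    next
      case (step m)
      have "g m \<le> 0" using gle[of m] step by simp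
      hence "g m = 0" using g0[of m] by simp
      thus ?case using rec[of "Suc m"] step by simp
    qed
    have "f j = 0" if "j \<ge> 1" for j using cz[OF that] unfolding f_def by simp
    hence "S n = 0" for n unfolding S_def by (intro sum.neutral) auto
    hence "S = (\<lambda>_. 0)" by auto
    hence "L = 0" using SL LIMSEQ_unique[OF SL, of 0] by simp
    have "\<forall>\<^sub>F n in sequentially. 0 = e n"
      by (rule eventually_sequentiallyI[of 1]) (use cz in \<open>simp add: e_def c_def\<close>)
    hence "e \<longlonglongrightarrow> 0" by (rule Lim_transform_eventually[OF tendsto_const])
    thus ?thesis using True \<open>L = 0\<close> by simp
  next
    case False
    hence c1: "c 1 > 0" using c0[of 1] by simp
    have cpos: "c n > 0" if "n \<ge> 1" for n
      using that
    proof (induction n rule: dec_induct)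
      case base thus ?case using c1 by simp
    next
      case (step m)
      have "c (Suc m) = (c m)\<^sup>2 + g m" using rec[of "Suc m"] step by simp
      thus ?case using step g0[of m] by (simp add: add_pos_nonneg)
    qed
    have key: "ln (c n) = 2 ^ (n-1) * (ln (c 1) + S n)" if "n \<ge> 1" for n
      using that
    proof (induction n rule: dec_induct)
      case base thus ?case by (simp add: S_def)
    next
      case (step m)
      have cm: "c m > 0" using cpos step by simp
      have "c (Suc m) = (c m)\<^sup>2 * (1 + g m / (c m)\<^sup>2)"
        using rec[of "Suc m"] step cm by (simp add: field_simps)
      moreover have "1 + g m / (c m)\<^sup>2 > 0" using g0[of m] cm
        by (simp add: add_pos_nonneg)
      ultimately have "ln (c (Suc m)) = 2 * ln (c m) + ln (1 + g m / (c m)\<^sup>2)"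
        using cm by (simp add: ln_mult ln_realpow)
      also have "\<dots> = 2 * 2 ^ (m-1) * (ln (c 1) + S m) + ln (1 + g m / (c m)\<^sup>2)"
        using step by simp
      also have "\<dots> = 2 ^ m * (ln (c 1) + S (Suc m))"
      proof -
        have "S (Suc m) = S m + f m" unfolding S_def using step by simp
        moreover have "(2::real) ^ m * (1/2) ^ m = 1"
          by (simp add: power_mult_distrib[symmetric])
        moreover have "2 * 2 ^ (m-1) = (2::real) ^ m" using step
          by (metis Suc_diff_1 less_le_trans power_Suc zero_less_one)
        ultimately show ?thesis unfolding f_def by (simp add: algebra_simps)
      qed
      finally show ?case by simp
    qed
    have q: "(\<lambda>n. 2 ^ (n-1) / (2 ^ (n + 1) - 1::real)) \<longlonglongrightarrow> 1/4"
    proof -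
      have "(\<lambda>n. 1 / (4 - 2 * (1/2::real) ^ n)) \<longlonglongrightarrow> 1 / (4 - 2 * 0)"
        by (intro tendsto_intros) auto
      hence lim: "(\<lambda>n. 1 / (4 - 2 * (1/2::real) ^ n)) \<longlonglongrightarrow> 1/4" by simp
      have "\<forall>\<^sub>F n in sequentially. 1 / (4 - 2 * (1/2::real) ^ n) = 2 ^ (n-1) / (2 ^ (n + 1) - 1)"
      proof (rule eventually_sequentiallyI[of 1])
        fix n :: nat assume n: "1 \<le> n"
        then obtain m where m: "n = Suc m" by (cases n) auto
        have p: "(2::real) ^ m > 0" by simp
        have "(1/2::real) ^ Suc m = 1 / (2 * 2 ^ m)" by (simp add: power_one_over)
        moreover have "4 * 2 ^ m - 1 > (0::real)" using one_le_power[of "2::real" m] by linarith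
        ultimately show "1 / (4 - 2 * (1/2::real) ^ n) = 2 ^ (n-1) / (2 ^ (n + 1) - 1)"
          using m p by (simp add: field_simps)
      qed
      thus ?thesis by (rule Lim_transform_eventually[OF lim])
    qed
    have "(\<lambda>n. (2 ^ (n-1) / (2 ^ (n + 1) - 1)) * (ln (c 1) + S n)) \<longlonglongrightarrow> (1/4) * (ln (c 1) + L)"
      by (intro tendsto_mult q tendsto_add tendsto_const SL)
    moreover have "\<forall>\<^sub>F n in sequentially. (2 ^ (n-1) / (2 ^ (n + 1) - 1)) * (ln (c 1) + S n) = e n"
    proof (rule eventually_sequentiallyI[of 1])
      fix n :: nat assume "1 \<le> n"
      thus "(2 ^ (n-1) / (2 ^ (n + 1) - 1)) * (ln (c 1) + S n) = e n"
        using key[of n] unfolding e_def c_def by simp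
    qed
    ultimately show ?thesis by (rule Lim_transform_eventually)
  qed
  have "Limsup sequentially (\<lambda>n. ereal (e n)) = ereal ((1/4) * (ln (c 1) + L))"
    proof (intro lim_imp_Limsup)
    show "((\<lambda>n. ereal (e n)) \<longlongrightarrow> ereal ((1/4) * (ln (c 1) + L))) sequentially"
      using elim by (rule tendsto_ereal)
  qed simp
  hence "sft_entropy B = ereal ((1/4) * (ln (real (snre_c B 1)) + L))"
    using ent unfolding c_def by simp
  moreover have "(\<lambda>n. \<Sum>j=1..<n. (1/2) ^ j *
                 ln (1 + real (poly2_eval G (snre_a B j) (snre_b B j)) / (real (snre_c B j))\<^sup>2))
             \<longlonglongrightarrow> L"
    using SL unfolding S_def f_def g_def c_def by simp
  ultimately show ?thesis by blast
qed

end
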